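(* Let $G$ be a bipartite simple graph with stable sets $X=\{x_i\}_{i=1}^s$ and $Y=\{y_j\}_{j=1}^t$, and suppose $G\cong H_1\oplus H_2$ is a decomposition of $G$. If $G$ is edge-magic (respectively, super edge-magic), then $S_2(G;H_1,H_2)$ is edge-magic (respectively, super edge-magic).
   Context: For a $(p,q)$-graph $G$ ($p$ vertices, $q$ edges), an edge-magic labeling is a bijection $f:V(G)\cup E(G)\to[1,p+q]$ such that $f(x)+f(xy)+f(y)$ is constant for every edge $xy$; it is super edge-magic if moreover $f(V(G))=[1,p]$. A decomposition $G\cong H_1\oplus H_2$ means $H_1,H_2$ are subgraphs of $G$ whose edge sets partition $E(G)$. $S_2(G;H_1,H_2)$ is the graph with vertex set $X\cup Y\cup X'\cup Y'$, where $X'=\{x_i'\}_{i=1}^s$ and $Y'=\{y_j'\}_{j=1}^t$ are new vertices, and edge set $E(G)\cup\{x_iy_j' : x_iy_j\in E(H_1)\}\cup\{x_i'y_j : x_iy_j\in E(H_2)\}$. *)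

theory Defs
  imports Main
begin

definition simple_graph :: "'a set \<Rightarrow> 'a set set \<Rightarrow> bool" where
  "simple_graph V E \<longleftrightarrow> finite V \<and>
     (\<forall>e\<in>E. \<exists>x y. x \<in> V \<and> y \<in> V \<and> x \<noteq> y \<and> e = {x, y})"

definition bipartite_with :: "'a set \<Rightarrow> 'a set set \<Rightarrow> 'a set \<Rightarrow> 'a set \<Rightarrow> bool" where
  "bipartite_with V E X Y \<longleftrightarrow> X \<inter> Y = {} \<and> X \<union> Y = V \<and>
     (\<forall>e\<in>E. \<exists>x\<in>X. \<exists>y\<in>Y. e = {x, y})"

text \<open>Labelings are functions on the disjoint union of vertices (Inl) and edges (Inr).\<close>
definition edge_magic_labeling :: "'a set \<Rightarrow> 'a set set \<Rightarrow> ('a + 'a set \<Rightarrow> nat) \<Rightarrow> bool" where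
  "edge_magic_labeling V E f \<longleftrightarrow>
     bij_betw f (Inl ` V \<union> Inr ` E) {1 .. card V + card E} \<and>
     (\<exists>k. \<forall>x y. {x, y} \<in> E \<longrightarrow> f (Inl x) + f (Inr {x, y}) + f (Inl y) = k)"

definition super_edge_magic_labeling :: "'a set \<Rightarrow> 'a set set \<Rightarrow> ('a + 'a set \<Rightarrow> nat) \<Rightarrow> bool" where
  "super_edge_magic_labeling V E f \<longleftrightarrow>
     edge_magic_labeling V E f \<and> f ` (Inl ` V) = {1 .. card V}"

definition edge_magic :: "'a set \<Rightarrow> 'a set set \<Rightarrow> bool" where
  "edge_magic V E \<longleftrightarrow> (\<exists>f. edge_magic_labeling V E f)"

definition super_edge_magic :: "'a set \<Rightarrow> 'a set set \<Rightarrow> bool" where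
  "super_edge_magic V E \<longleftrightarrow> (\<exists>f. super_edge_magic_labeling V E f)"

text \<open>The graph S_2(G;H_1,H_2). Original vertices v are Inl v, the new copies v' are Inr v.
  E1, E2 are the edge sets of H_1, H_2.\<close>
definition S2_vertices :: "'a set \<Rightarrow> 'a set \<Rightarrow> ('a + 'a) set" where
  "S2_vertices X Y = Inl ` (X \<union> Y) \<union> Inr ` (X \<union> Y)"

definition S2_edges :: "'a set set \<Rightarrow> 'a set \<Rightarrow> 'a set \<Rightarrow> 'a set set \<Rightarrow> 'a set set \<Rightarrow> ('a + 'a) set set" where
  "S2_edges E X Y E1 E2 =
     (\<lambda>e. Inl ` e) ` E
     \<union> {{Inl x, Inr y} | x y. x \<in> X \<and> y \<in> Y \<and> {x, y} \<in> E1}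
     \<union> {{Inr x, Inl y} | x y. x \<in> X \<and> y \<in> Y \<and> {x, y} \<in> E2}"

end

theory Submission
  imports Defs
begin

definition proj :: "('a+'a) set \<Rightarrow> 'a set" where
  "proj S = {a. Inl a \<in> S \<or> Inr a \<in> S}"

definition pb :: "('a+'a) + ('a+'a) set \<Rightarrow> ('a + 'a set) \<times> bool" where
  "pb z = (case z of Inl (Inl v) \<Rightarrow> (Inl v, True) | Inl (Inr v) \<Rightarrow> (Inl v, False)
           | Inr S \<Rightarrow> (Inr (proj S), \<not> S \<subseteq> range Inl))"

definition phi :: "('b \<Rightarrow> nat) \<Rightarrow> 'b \<times> bool \<Rightarrow> nat" where
  "phi f = (\<lambda>(d,b). 2 * f d - (if b then 1 else 0))"

lemma proj_Inl[simp]: "proj (Inl ` e) = e" by (auto simp: proj_def)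
lemma proj_1[simp]: "proj {Inl x, Inr y} = {x,y}" by (auto simp: proj_def)
lemma proj_2[simp]: "proj {Inr x, Inl y} = {x,y}" by (auto simp: proj_def)

lemma phi_inj_aux:
  fixes a a' :: nat and b b' :: bool
  assumes "a \<ge> 1" "a' \<ge> 1" "2*a - (if b then 1 else 0) = 2*a' - (if b' then 1 else 0)"
  shows "a = a' \<and> b = b'"
  using assms by (cases b; cases b'; simp; presburger)

lemma phi_bij:
  assumes bij: "bij_betw f D {1..n}"
  shows "bij_betw (phi f) (D \<times> UNIV) {1..2*n}"
proof -
  have fin: "finite D" using bij bij_betw_finite by blast
  have injf: "inj_on f D" and im: "f ` D = {1..n}" using bij by (auto simp: bij_betw_def)
  have ge: "\<And>d. d \<in> D \<Longrightarrow> f d \<ge> 1" using im by force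
  have inj: "inj_on (phi f) (D \<times> UNIV)"
  proof (rule inj_onI)
    fix p q assume p: "p \<in> D \<times> UNIV" and q: "q \<in> D \<times> UNIV" and eq: "phi f p = phi f q"
    obtain d b where pd: "p = (d,b)" by (cases p)
    obtain d' b' where qd: "q = (d',b')" by (cases q)
    have d: "d \<in> D" "d' \<in> D" using p q pd qd by auto
    have "f d = f d' \<and> b = b'" using phi_inj_aux[OF ge[OF d(1)] ge[OF d(2)]] eq pd qd by (simp add: phi_def)
    then show "p = q" using injf d pd qd by (auto dest: inj_onD)
  qed
  have sub: "phi f ` (D \<times> UNIV) \<subseteq> {1..2*n}"
  proof
    fix m assume "m \<in> phi f ` (D \<times> UNIV)"
    then obtain d b where d: "d \<in> D" and m: "m = phi f (d,b)" by auto
    then have "f d \<in> {1..n}" using im by blast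
    then show "m \<in> {1..2*n}" using m by (cases b) (auto simp: phi_def)
  qed
  have cD: "card D = n" using bij_betw_same_card[OF bij] by simp
  have "card (phi f ` (D \<times> UNIV)) = 2*n"
    using card_image[OF inj] card_cartesian_product[of D "UNIV::bool set"] cD by simp
  then have "phi f ` (D \<times> UNIV) = {1..2*n}" using sub by (intro card_subset_eq) auto
  then show ?thesis using inj by (simp add: bij_betw_def)
qed

lemma S2_edge_cases:
  assumes "S \<in> S2_edges E X Y E1 E2"
  obtains (old) e where "e \<in> E" "S = Inl ` e"
    | (n1) x y where "x \<in> X" "y \<in> Y" "{x,y} \<in> E1" "S = {Inl x, Inr y}"
    | (n2) x y where "x \<in> X" "y \<in> Y" "{x,y} \<in> E2" "S = {Inr x, Inl y}"
  using assms unfolding S2_edges_def by blast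

lemma pb_bij:
  assumes bip: "bipartite_with V E X Y"
    and u: "E1 \<union> E2 = E" and dj: "E1 \<inter> E2 = {}"
  shows "bij_betw pb (Inl ` S2_vertices X Y \<union> Inr ` S2_edges E X Y E1 E2)
           ((Inl ` V \<union> Inr ` E) \<times> (UNIV::bool set))"
proof -
  have XY: "X \<inter> Y = {}" "X \<union> Y = V" and eb: "\<And>e. e \<in> E \<Longrightarrow> \<exists>x\<in>X. \<exists>y\<in>Y. e = {x,y}"
    using bip by (auto simp: bipartite_with_def)
  let ?D' = "Inl ` S2_vertices X Y \<union> Inr ` S2_edges E X Y E1 E2"
  let ?E' = "S2_edges E X Y E1 E2"
  have sub: "pb ` ?D' \<subseteq> (Inl ` V \<union> Inr ` E) \<times> (UNIV::bool set)"
  proof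
    fix w assume "w \<in> pb ` ?D'"
    then obtain z where z: "z \<in> ?D'" and w: "w = pb z" by auto
    show "w \<in> (Inl ` V \<union> Inr ` E) \<times> (UNIV::bool set)"
    proof (cases "z \<in> Inl ` S2_vertices X Y")
      case True
      then show ?thesis using w XY by (auto simp: S2_vertices_def pb_def)
    next
      case False
      then obtain S where S: "S \<in> ?E'" "z = Inr S" using z by auto
      from S(1) show ?thesis
      proof (cases rule: S2_edge_cases)
        case (old e) then show ?thesis using S w by (auto simp: pb_def)
      next
        case (n1 x y) then show ?thesis using S w u by (auto simp: pb_def)
      next
        case (n2 x y) then show ?thesis using S w u by (auto simp: pb_def)
      qed
    qed
  qed
  have sup: "(Inl ` V \<union> Inr ` E) \<times> (UNIV::bool set) \<subseteq> pb ` ?D'"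
  proof
    fix w assume w: "w \<in> (Inl ` V \<union> Inr ` E) \<times> (UNIV::bool set)"
    obtain d b where wd: "w = (d,b)" by (cases w)
    show "w \<in> pb ` ?D'"
    proof (cases d)
      case (Inl v)
      then have v: "v \<in> X \<union> Y" using w wd XY by auto
      show ?thesis
      proof (cases b)
        case True
        have "pb (Inl (Inl v)) = w" using wd Inl True by (simp add: pb_def)
        moreover have "Inl (Inl v) \<in> ?D'" using v by (auto simp: S2_vertices_def)
        ultimately show ?thesis by force
      next
        case False
        have "pb (Inl (Inr v)) = w" using wd Inl False by (simp add: pb_def)
        moreover have "Inl (Inr v) \<in> ?D'" using v by (auto simp: S2_vertices_def)
        ultimately show ?thesis by force
      qed
    next
      case (Inr e)
      then have e: "e \<in> E" using w wd by auto
      show ?thesis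
      proof (cases b)
        case False
        have "pb (Inr (Inl ` e)) = w" using wd Inr False by (auto simp: pb_def)
        moreover have "Inr (Inl ` e) \<in> ?D'" using e by (auto simp: S2_edges_def)
        ultimately show ?thesis by force
      next
        case True
        obtain x y where xy: "x \<in> X" "y \<in> Y" "e = {x,y}" using eb[OF e] by blast
        show ?thesis
        proof (cases "e \<in> E1")
          case True
          have "pb (Inr {Inl x, Inr y}) = w" using wd Inr \<open>b\<close> xy by (auto simp: pb_def)
          moreover have "Inr {Inl x, Inr y} \<in> ?D'" using xy True unfolding S2_edges_def by blast
          ultimately show ?thesis by force
        next
          case False
          then have "e \<in> E2" using e u by auto
          have "pb (Inr {Inr x, Inl y}) = w" using wd Inr \<open>b\<close> xy by (auto simp: pb_def)
          moreover have "Inr {Inr x, Inl y} \<in> ?D'" using xy \<open>e \<in> E2\<close> unfolding S2_edges_def by blast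
          ultimately show ?thesis by force
        qed
      qed
    qed
  qed
  have xyeq: "\<And>x y x' y'. x \<in> X \<Longrightarrow> y \<in> Y \<Longrightarrow> x' \<in> X \<Longrightarrow> y' \<in> Y \<Longrightarrow> {x,y} = {x',y'}
      \<Longrightarrow> x = x' \<and> y = y'"
    using XY(1) by (auto simp: doubleton_eq_iff)
  have inj: "inj_on pb ?D'"
  proof (rule inj_onI)
    fix z z' assume z: "z \<in> ?D'" and z': "z' \<in> ?D'" and eq: "pb z = pb z'"
    show "z = z'"
    proof (cases z)
      case (Inl a)
      then show ?thesis using eq by (cases a; cases z'; auto simp: pb_def split: sum.splits)
    next
      case (Inr S)
      then obtain S' where S': "z' = Inr S'" using eq by (cases z'; auto simp: pb_def split: sum.splits)
      have S: "S \<in> ?E'" "S' \<in> ?E'" using z z' Inr S' by auto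
      have pe: "proj S = proj S'" and be: "(S \<subseteq> range Inl) = (S' \<subseteq> range Inl)"
        using eq Inr S' by (auto simp: pb_def)
      have "S = S'"
        using S(1)
      proof (cases rule: S2_edge_cases)
        case (old e)
        from S(2) show ?thesis
        proof (cases rule: S2_edge_cases)
          case (old e') then show ?thesis using \<open>S = Inl ` e\<close> pe by simp
        next
          case (n1 x y) then show ?thesis using \<open>S = Inl ` e\<close> be by auto
        next
          case (n2 x y) then show ?thesis using \<open>S = Inl ` e\<close> be by auto
        qed
      next
        case (n1 x y)
        from S(2) show ?thesis
        proof (cases rule: S2_edge_cases)
          case (old e') then show ?thesis using \<open>S = {Inl x, Inr y}\<close> be by auto
        next
          case (n1 x' y') then show ?thesis using \<open>S = {Inl x, Inr y}\<close> pe xyeq[of x y x' y'] \<open>x \<in> X\<close> \<open>y \<in> Y\<close> by simp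
        next
          case (n2 x' y')
          have "x = x' \<and> y = y'" using xyeq[of x y x' y'] n2 \<open>S = {Inl x, Inr y}\<close> pe \<open>x \<in> X\<close> \<open>y \<in> Y\<close> by simp
          then show ?thesis using n2 \<open>{x,y} \<in> E1\<close> dj by auto
        qed
      next
        case (n2 x y)
        from S(2) show ?thesis
        proof (cases rule: S2_edge_cases)
          case (old e') then show ?thesis using \<open>S = {Inr x, Inl y}\<close> be by auto
        next
          case (n1 x' y')
          have "x = x' \<and> y = y'" using xyeq[of x y x' y'] n1 \<open>S = {Inr x, Inl y}\<close> pe \<open>x \<in> X\<close> \<open>y \<in> Y\<close> by simp
          then show ?thesis using n1 \<open>{x,y} \<in> E2\<close> dj by auto
        next
          case (n2 x' y') then show ?thesis using \<open>S = {Inr x, Inl y}\<close> pe xyeq[of x y x' y'] \<open>x \<in> X\<close> \<open>y \<in> Y\<close> by simp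
        qed
      qed
      then show ?thesis using Inr S' by simp
    qed
  qed
  show ?thesis using inj sub sup by (auto simp: bij_betw_def)
qed

lemma proj_3[simp]: "proj {Inl x, Inl y} = {x,y}" by (auto simp: proj_def)

lemma g_simps:
  "phi f (pb (Inl (Inl a))) = 2 * f (Inl a) - 1"
  "phi f (pb (Inl (Inr a))) = 2 * f (Inl a)"
  "phi f (pb (Inr {Inl a, Inl b})) = 2 * f (Inr {a,b})"
  "phi f (pb (Inr {Inl a, Inr b})) = 2 * f (Inr {a,b}) - 1"
  "phi f (pb (Inr {Inr a, Inl b})) = 2 * f (Inr {a,b}) - 1"
  by (auto simp: phi_def pb_def)

lemma main_lemma:
  assumes sg: "simple_graph V E"
    and bip: "bipartite_with V E X Y"
    and u: "E1 \<union> E2 = E" and dj: "E1 \<inter> E2 = {}"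
    and f: "edge_magic_labeling V E f"
  shows "edge_magic_labeling (S2_vertices X Y) (S2_edges E X Y E1 E2) (phi f \<circ> pb)"
    and "f ` (Inl ` V) = {1..card V} \<Longrightarrow>
         (phi f \<circ> pb) ` (Inl ` S2_vertices X Y) = {1..card (S2_vertices X Y)}"
proof -
  let ?D = "Inl ` V \<union> Inr ` E"
  let ?n = "card V + card E"
  let ?V' = "S2_vertices X Y"
  let ?E' = "S2_edges E X Y E1 E2"
  let ?D' = "Inl ` ?V' \<union> Inr ` ?E'"
  let ?g = "phi f \<circ> pb"
  have XY: "X \<inter> Y = {}" "X \<union> Y = V"
    using bip by (auto simp: bipartite_with_def)
  have fb: "bij_betw f ?D {1..?n}" and mag: "\<exists>k. \<forall>x y. {x, y} \<in> E \<longrightarrow> f (Inl x) + f (Inr {x, y}) + f (Inl y) = k"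
    using f by (auto simp: edge_magic_labeling_def)
  then obtain k where k: "\<And>x y. {x, y} \<in> E \<Longrightarrow> f (Inl x) + f (Inr {x, y}) + f (Inl y) = k" by blast
  have pbb: "bij_betw pb ?D' (?D \<times> (UNIV::bool set))" using pb_bij[OF bip u dj] .
  have gb: "bij_betw ?g ?D' {1..2*?n}" using bij_betw_trans[OF pbb phi_bij[OF fb]] .
  have cD: "card ?D = ?n" using bij_betw_same_card[OF fb] by simp
  have cD': "card ?D' = 2 * ?n"
    using bij_betw_same_card[OF pbb] card_cartesian_product[of ?D "UNIV::bool set"] cD by simp
  have finD': "finite ?D'" using gb bij_betw_finite by blast
  have "card ?D' = card (Inl ` ?V' :: (('a+'a) + ('a+'a) set) set) + card (Inr ` ?E' :: (('a+'a) + ('a+'a) set) set)"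
    by (rule card_Un_disjoint) (use finD' in auto)
  also have "\<dots> = card ?V' + card ?E'" by (simp add: card_image)
  finally have cc: "card ?V' + card ?E' = 2 * ?n" using cD' by simp
  have im: "f ` ?D = {1..?n}" using fb by (simp add: bij_betw_def)
  have geV: "\<And>a. a \<in> V \<Longrightarrow> f (Inl a) \<ge> 1" using im by force
  have geE: "\<And>e. e \<in> E \<Longrightarrow> f (Inr e) \<ge> 1" using im by force
  have eV: "\<And>e. e \<in> E \<Longrightarrow> \<exists>a b. a \<in> V \<and> b \<in> V \<and> a \<noteq> b \<and> e = {a,b}"
    using sg by (auto simp: simple_graph_def)
  have magic: "\<forall>x y. {x, y} \<in> ?E' \<longrightarrow> ?g (Inl x) + ?g (Inr {x, y}) + ?g (Inl y) = 2*k - 2"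
  proof (intro allI impI)
    fix p q assume pq: "{p, q} \<in> ?E'"
    then show "?g (Inl p) + ?g (Inr {p, q}) + ?g (Inl q) = 2*k - 2"
    proof (cases rule: S2_edge_cases)
      case (old e)
      obtain a b where ab: "a \<in> V" "b \<in> V" "e = {a,b}" using eV[OF old(1)] by blast
      have ee: "{p,q} = {Inl a, Inl b}" using old ab by simp
      have k1: "f (Inl a) + f (Inr {a, b}) + f (Inl b) = k" using k old ab by simp
      have g1: "f (Inl a) \<ge> 1" "f (Inl b) \<ge> 1" using geV ab by auto
      have ge: "?g (Inr {p,q}) = 2*f(Inr{a,b})" using ee by (simp add: g_simps)
      from ee have "(p = Inl a \<and> q = Inl b) \<or> (p = Inl b \<and> q = Inl a)" by (simp add: doubleton_eq_iff)
      then show ?thesis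
      proof
        assume "p = Inl a \<and> q = Inl b"
        then show ?thesis using ge g1 k1 by (simp add: g_simps)
      next
        assume "p = Inl b \<and> q = Inl a"
        then show ?thesis using ge g1 k1 by (simp add: g_simps)
      qed
    next
      case (n1 x y)
      have xy: "x \<in> V" "y \<in> V" "{x,y} \<in> E" using n1 XY u by auto
      have k1: "f (Inl x) + f (Inr {x, y}) + f (Inl y) = k" using k xy by simp
      have g1: "f (Inl x) \<ge> 1" "f (Inl y) \<ge> 1" "f (Inr {x,y}) \<ge> 1" using geV geE xy by auto
      have ge: "?g (Inr {p,q}) = 2*f(Inr{x,y}) - 1" using n1 by (simp add: g_simps)
      from n1 have "(p = Inl x \<and> q = Inr y) \<or> (p = Inr y \<and> q = Inl x)" by (simp add: doubleton_eq_iff)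
      then show ?thesis
      proof
        assume "p = Inl x \<and> q = Inr y"
        then show ?thesis using ge g1 k1 by (simp add: g_simps)
      next
        assume "p = Inr y \<and> q = Inl x"
        then show ?thesis using ge g1 k1 by (simp add: g_simps)
      qed
    next
      case (n2 x y)
      have xy: "x \<in> V" "y \<in> V" "{x,y} \<in> E" using n2 XY u by auto
      have k1: "f (Inl x) + f (Inr {x, y}) + f (Inl y) = k" using k xy by simp
      have g1: "f (Inl x) \<ge> 1" "f (Inl y) \<ge> 1" "f (Inr {x,y}) \<ge> 1" using geV geE xy by auto
      have ge: "?g (Inr {p,q}) = 2*f(Inr{x,y}) - 1" using n2 by (simp add: g_simps)
      from n2 have "(p = Inr x \<and> q = Inl y) \<or> (p = Inl y \<and> q = Inr x)" by (simp add: doubleton_eq_iff)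
      then show ?thesis
      proof
        assume "p = Inr x \<and> q = Inl y"
        then show ?thesis using ge g1 k1 by (simp add: g_simps)
      next
        assume "p = Inl y \<and> q = Inr x"
        then show ?thesis using ge g1 k1 by (simp add: g_simps)
      qed
    qed
  qed
  show "edge_magic_labeling ?V' ?E' ?g"
    unfolding edge_magic_labeling_def using gb cc magic by auto
  assume sv: "f ` (Inl ` V) = {1..card V}"
  have finV: "finite V" using sg by (simp add: simple_graph_def)
  have V'eq: "?V' = Inl ` V \<union> Inr ` V" using XY by (simp add: S2_vertices_def)
  have cV': "card ?V' = 2 * card V"
    unfolding V'eq by (subst card_Un_disjoint) (use finV in \<open>auto simp: card_image\<close>)
  have fV: "bij_betw f (Inl ` V) {1..card V}"
    using fb sv unfolding bij_betw_def by (auto intro: inj_on_subset)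
  have pbV: "pb ` (Inl ` ?V') = Inl ` V \<times> (UNIV::bool set)"
  proof
    show "pb ` (Inl ` ?V') \<subseteq> Inl ` V \<times> UNIV" using V'eq by (auto simp: pb_def)
  next
    show "Inl ` V \<times> UNIV \<subseteq> pb ` (Inl ` ?V')"
    proof clarify
      fix v b assume v: "v \<in> V"
      show "(Inl v, b) \<in> pb ` (Inl ` ?V')"
      proof (cases b)
        case True
        then show ?thesis using v V'eq by (intro rev_image_eqI[of "Inl (Inl v)"]) (auto simp: pb_def)
      next
        case False
        then show ?thesis using v V'eq by (intro rev_image_eqI[of "Inl (Inr v)"]) (auto simp: pb_def)
      qed
    qed
  qed
  have "?g ` (Inl ` ?V') = phi f ` (Inl ` V \<times> UNIV)" by (simp only: image_comp[symmetric] pbV)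
  also have "\<dots> = {1..2 * card V}" using phi_bij[OF fV] by (simp add: bij_betw_def)
  finally show "?g ` (Inl ` ?V') = {1..card ?V'}" using cV' by simp
qed

theorem mainTheorem7:
  fixes V X Y :: "'a set" and E E1 E2 :: "'a set set"
  assumes "simple_graph V E"
    and "bipartite_with V E X Y"
    and "E1 \<union> E2 = E" and "E1 \<inter> E2 = {}"
  shows "(edge_magic V E \<longrightarrow> edge_magic (S2_vertices X Y) (S2_edges E X Y E1 E2)) \<and>
         (super_edge_magic V E \<longrightarrow> super_edge_magic (S2_vertices X Y) (S2_edges E X Y E1 E2))"
proof (intro conjI impI)
  assume "edge_magic V E"
  then obtain f where f: "edge_magic_labeling V E f" by (auto simp: edge_magic_def)
  show "edge_magic (S2_vertices X Y) (S2_edges E X Y E1 E2)"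
    using main_lemma(1)[OF assms f] by (auto simp: edge_magic_def)
next
  assume "super_edge_magic V E"
  then obtain f where f: "edge_magic_labeling V E f" and sv: "f ` (Inl ` V) = {1..card V}"
    by (auto simp: super_edge_magic_def super_edge_magic_labeling_def)
  show "super_edge_magic (S2_vertices X Y) (S2_edges E X Y E1 E2)"
    unfolding super_edge_magic_def super_edge_magic_labeling_def
    using main_lemma(1)[OF assms f] main_lemma(2)[OF assms f sv] by blast
qed

end
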